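(* Let $f\in\mathcal{K}$ have radius of convergence $R>0$, Khinchin family $(X_t)$ and fulcrum $F$. For every integer $n\ge3$, $$\limsup_{s\uparrow\ln R}\frac{|F^{(j)}(s)|}{F''(s)^{j/2}}<+\infty\quad\text{for every }3\le j\le n$$ if and only if $$\limsup_{t\uparrow R}|\mathbf{E}(\breve{X}_t^k)|<+\infty\quad\text{for every }3\le k\le n.$$
   Context: The class $\mathcal{K}$ consists of non-constant power series $f(z)=\sum_{n\ge0}a_nz^n$ with radius of convergence $R\in(0,+\infty]$, with $a_n\ge 0$ for all $n$ and $a_0>0$. For $t\in(0,R)$, $X_t$ is the random variable with $\mathbf{P}(X_t=n)=a_nt^n/f(t)$, $n\ge0$. Write $m_f(t)=\mathbf{E}(X_t)$, $\sigma_f^2(t)=\mathbf{V}(X_t)>0$ and $\breve{X}_t=(X_t-m_f(t))/\sigma_f(t)$. The fulcrum of $f$ is $F(s)=\ln f(e^s)$ for real $s<\ln R$ (with $\ln R=+\infty$ if $R=+\infty$); $F''(s)=\sigma_f^2(e^s)$. *)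

theory Defs
  imports "HOL-Analysis.Analysis"
begin

text \<open>A power series f(z) = sum a_n z^n is represented by its coefficient sequence a.\<close>

definition inK :: "(nat \<Rightarrow> real) \<Rightarrow> bool" where
  "inK a \<longleftrightarrow> (\<forall>n. a n \<ge> 0) \<and> a 0 > 0 \<and> (\<exists>n>0. a n \<noteq> 0) \<and> conv_radius a > 0"

definition pfun :: "(nat \<Rightarrow> real) \<Rightarrow> real \<Rightarrow> real" where
  "pfun a t = (\<Sum>n. a n * t ^ n)"

text \<open>Khinchin family: P(X_t = n) = a_n t^n / f(t).\<close>
definition kprob :: "(nat \<Rightarrow> real) \<Rightarrow> real \<Rightarrow> nat \<Rightarrow> real" where
  "kprob a t n = a n * t ^ n / pfun a t"

definition kexp :: "(nat \<Rightarrow> real) \<Rightarrow> real \<Rightarrow> (nat \<Rightarrow> real) \<Rightarrow> real" where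
  "kexp a t g = (\<Sum>n. g n * kprob a t n)"

definition kmean :: "(nat \<Rightarrow> real) \<Rightarrow> real \<Rightarrow> real" where
  "kmean a t = kexp a t (\<lambda>n. real n)"

definition kvar :: "(nat \<Rightarrow> real) \<Rightarrow> real \<Rightarrow> real" where
  "kvar a t = kexp a t (\<lambda>n. (real n - kmean a t) ^ 2)"

definition ksigma :: "(nat \<Rightarrow> real) \<Rightarrow> real \<Rightarrow> real" where
  "ksigma a t = sqrt (kvar a t)"

definition knormmoment :: "(nat \<Rightarrow> real) \<Rightarrow> nat \<Rightarrow> real \<Rightarrow> real" where
  "knormmoment a k t = kexp a t (\<lambda>n. ((real n - kmean a t) / ksigma a t) ^ k)"

definition fulcrum :: "(nat \<Rightarrow> real) \<Rightarrow> real \<Rightarrow> real" where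
  "fulcrum a s = ln (pfun a (exp s))"

definition to_R :: "(nat \<Rightarrow> real) \<Rightarrow> real filter" where
  "to_R a = (if conv_radius a = \<infinity> then at_top else at_left (real_of_ereal (conv_radius a)))"

definition to_lnR :: "(nat \<Rightarrow> real) \<Rightarrow> real filter" where
  "to_lnR a = (if conv_radius a = \<infinity> then at_top else at_left (ln (real_of_ereal (conv_radius a))))"

end

theory Submission
  imports Defs
begin

definition chainN :: "real set \<Rightarrow> nat \<Rightarrow> (nat \<Rightarrow> real \<Rightarrow> real) \<Rightarrow> bool" where
  "chainN S N u \<longleftrightarrow> (\<forall>k<N. \<forall>x\<in>S. (u k has_real_derivative u (Suc k) x) (at x))"

lemma chain_deriv:
  assumes "open S" "chainN S N u" "\<forall>y\<in>S. f y = u 0 y"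
  shows "k \<le> N \<Longrightarrow> x \<in> S \<Longrightarrow> (deriv^^k) f x = u k x"
proof (induction k arbitrary: x)
  case 0 thus ?case using assms by simp
next
  case (Suc k)
  have IH: "\<forall>y\<in>S. (deriv^^k) f y = u k y" using Suc by auto
  have "(u k has_real_derivative u (Suc k) x) (at x)" using assms(2) Suc.prems unfolding chainN_def by auto
  hence "((deriv^^k) f has_real_derivative u (Suc k) x) (at x)"
    by (rule has_field_derivative_transform_within_open[OF _ assms(1) Suc.prems(2)]) (use IH in auto)
  thus ?case by (simp add: DERIV_imp_deriv)
qed

lemma Suc_choose': "Suc n choose k = (n choose k) + (if k = 0 then 0 else (n choose (k-1)))"
  by (cases k) simp_all

lemma leibniz_sum:
  fixes u v :: "nat \<Rightarrow> real"
  shows "(\<Sum>i=0..k. real (k choose i) * (u (Suc i) * v (k-i) + u i * v (Suc (k-i))))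
     = (\<Sum>i=0..Suc k. real (Suc k choose i) * u i * v (Suc k - i))"
proof -
  have "(\<Sum>i=0..Suc k. real (Suc k choose i) * u i * v (Suc k - i))
      = (\<Sum>i=0..Suc k. real (k choose i) * u i * v (Suc k - i))
        + (\<Sum>i=0..Suc k. real (if i = 0 then 0 else (k choose (i-1))) * u i * v (Suc k - i))"
    by (simp add: Suc_choose' algebra_simps sum.distrib)
  also have "(\<Sum>i=0..Suc k. real (k choose i) * u i * v (Suc k - i)) = (\<Sum>i=0..k. real (k choose i) * u i * v (Suc (k - i)))"
    by (simp add: Suc_diff_le)
  also have "(\<Sum>i=0..Suc k. real (if i = 0 then 0 else (k choose (i-1))) * u i * v (Suc k - i))
       = (\<Sum>i=0..k. real (k choose i) * u (Suc i) * v (k - i))"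
    by (subst sum.atLeast0_atMost_Suc_shift) simp
  finally show ?thesis by (simp add: algebra_simps sum.distrib)
qed

lemma chain_mult:
  assumes "chainN S N u" "chainN S N v"
  shows "chainN S N (\<lambda>k x. \<Sum>i=0..k. real (k choose i) * u i x * v (k-i) x)"
  unfolding chainN_def
proof (intro allI impI ballI)
  fix k x assume k: "k < N" and x: "x \<in> S"
  have du: "\<And>i. i \<le> k \<Longrightarrow> (u i has_real_derivative u (Suc i) x) (at x)"
    using assms(1) k x unfolding chainN_def by auto
  have dv: "\<And>i. i \<le> k \<Longrightarrow> (v (k-i) has_real_derivative v (Suc (k-i)) x) (at x)"
    using assms(2) k x unfolding chainN_def by auto
  have "((\<lambda>x. \<Sum>i=0..k. real (k choose i) * u i x * v (k-i) x) has_real_derivative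
     (\<Sum>i=0..k. real (k choose i) * (u (Suc i) x * v (k-i) x + u i x * v (Suc (k-i)) x))) (at x)"
  proof (rule DERIV_sum)
    fix i assume "i \<in> {0..k}"
    hence i: "i \<le> k" by simp
    have "((\<lambda>x. u i x * v (k-i) x) has_real_derivative (u (Suc i) x * v (k-i) x + u i x * v (Suc (k-i)) x)) (at x)"
      using DERIV_mult[OF du[OF i] dv[OF i]] by (simp add: algebra_simps)
    from DERIV_cmult[OF this, of "real (k choose i)"]
    show "((\<lambda>x. real (k choose i) * u i x * v (k-i) x) has_real_derivative
        real (k choose i) * (u (Suc i) x * v (k-i) x + u i x * v (Suc (k-i)) x)) (at x)"
      by (simp add: algebra_simps)
  qed
  thus "((\<lambda>x. \<Sum>i=0..k. real (k choose i) * u i x * v (k-i) x) has_real_derivative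
     (\<Sum>i=0..Suc k. real (Suc k choose i) * u i x * v (Suc k - i) x)) (at x)"
    using leibniz_sum[of k "\<lambda>i. u i x" "\<lambda>i. v i x"] by simp
qed

lemma inK_R: "inK a \<Longrightarrow> conv_radius a > 0" by (simp add: inK_def)

lemma exists_K:
  assumes "ereal x < conv_radius a"
  shows "\<exists>K. x < K \<and> ereal K < conv_radius a"
  using ereal_dense2[OF assms] by (metis less_ereal.simps(1))

lemma summ_pow:
  fixes a :: "nat \<Rightarrow> real"
  shows "ereal \<bar>t\<bar> < conv_radius a \<Longrightarrow> summable (\<lambda>n. a n * real n ^ k * t ^ n)"
proof (induction k arbitrary: t)
  case 0
  then show ?case using summable_in_conv_radius[of t a] by simp
next
  case (Suc k)
  obtain K where K: "\<bar>t\<bar> < K" "ereal K < conv_radius a" using exists_K[OF Suc.prems] by blast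
  define b where "b n = a n * real n ^ k" for n
  have "summable (\<lambda>n. diffs b n * t ^ n)"
  proof (rule termdiff_converges[of t K])
    show "norm t < K" using K by simp
    fix x :: real assume "norm x < K"
    hence "ereal \<bar>x\<bar> < conv_radius a" using K by (metis ereal_less_eq(3) less_le_not_le not_le order.strict_trans2 real_norm_def)
    thus "summable (\<lambda>n. b n * x ^ n)" using Suc.IH unfolding b_def by blast
  qed
  hence "summable (\<lambda>n. diffs b n * t ^ n * t)" by (rule summable_mult2)
  hence "summable (\<lambda>n. b (Suc n) * real (Suc n) * t ^ (Suc n))"
    by (simp add: diffs_def algebra_simps)
  hence "summable (\<lambda>n. b n * real n * t ^ n)"
    by (subst summable_Suc_iff[symmetric]) simp
  thus ?case by (simp add: b_def algebra_simps)
qed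

lemma summ_shift:
  fixes a :: "nat \<Rightarrow> real"
  assumes "inK a" "ereal \<bar>t\<bar> < conv_radius a"
  shows "summable (\<lambda>n. a n * (real n - m) ^ k * t ^ n)"
proof (rule summable_comparison_test')
  have ap: "\<And>n. a n \<ge> 0" using assms(1) by (simp add: inK_def)
  have at: "\<bar>\<bar>t\<bar>\<bar> = \<bar>t\<bar>" by simp
  show "summable (\<lambda>n. \<Sum>i\<le>k. real (k choose i) * \<bar>m\<bar> ^ (k - i) * (a n * real n ^ i * \<bar>t\<bar> ^ n))"
    by (intro summable_sum summable_mult summ_pow) (use assms(2) in simp)
  fix n :: nat assume "n \<ge> 0"
  have "\<bar>real n - m\<bar> ^ k \<le> (real n + \<bar>m\<bar>) ^ k"
    by (intro power_mono) auto
  also have "\<dots> = (\<Sum>i\<le>k. real (k choose i) * real n ^ i * \<bar>m\<bar> ^ (k - i))"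
    by (rule binomial_ring)
  finally have *: "\<bar>real n - m\<bar> ^ k \<le> (\<Sum>i\<le>k. real (k choose i) * real n ^ i * \<bar>m\<bar> ^ (k - i))" .
  have "norm (a n * (real n - m) ^ k * t ^ n) = a n * \<bar>real n - m\<bar> ^ k * \<bar>t\<bar> ^ n"
    using ap[of n] by (simp add: abs_mult power_abs)
  also have "\<dots> \<le> a n * (\<Sum>i\<le>k. real (k choose i) * real n ^ i * \<bar>m\<bar> ^ (k - i)) * \<bar>t\<bar> ^ n"
    using * ap[of n] by (intro mult_right_mono mult_left_mono) auto
  also have "\<dots> = (\<Sum>i\<le>k. real (k choose i) * \<bar>m\<bar> ^ (k - i) * (a n * real n ^ i * \<bar>t\<bar> ^ n))"
    by (simp add: sum_distrib_left sum_distrib_right algebra_simps)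
  finally show "norm (a n * (real n - m) ^ k * t ^ n) \<le> (\<Sum>i\<le>k. real (k choose i) * \<bar>m\<bar> ^ (k - i) * (a n * real n ^ i * \<bar>t\<bar> ^ n))" .
qed

definition Em :: "(nat \<Rightarrow> real) \<Rightarrow> real \<Rightarrow> nat \<Rightarrow> real \<Rightarrow> real" where
  "Em a m k s = (\<Sum>n. a n * (real n - m) ^ k * exp s ^ n) * exp (- m * s)"

lemma Em_deriv:
  fixes a :: "nat \<Rightarrow> real"
  assumes "inK a" "ereal (exp s) < conv_radius a"
  shows "(Em a m k has_real_derivative Em a m (Suc k) s) (at s)"
proof -
  define c where "c n = a n * (real n - m) ^ k" for n
  define t where "t = exp s"
  obtain K where K: "exp s < K" "ereal K < conv_radius a" using exists_K[OF assms(2)] by blast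
  have sm: "summable (\<lambda>n. c n * z ^ n)" if "norm z < K" for z
  proof -
    have "ereal \<bar>z\<bar> < conv_radius a" using that K by (metis ereal_less_eq(3) less_le_not_le not_le order.strict_trans2 real_norm_def)
    thus ?thesis unfolding c_def by (rule summ_shift[OF assms(1)])
  qed
  have nt: "norm t < K" using K by (simp add: t_def)
  have dP: "((\<lambda>z. \<Sum>n. c n * z ^ n) has_real_derivative (\<Sum>n. diffs c n * t ^ n)) (at t)"
    by (rule termdiffs_strong'[OF sm nt]) 
  have sd: "summable (\<lambda>n. diffs c n * t ^ n)" by (rule termdiff_converges[OF nt sm])
  have "(\<lambda>n. of_nat n * c n * t ^ (n - Suc 0) * t) sums ((\<Sum>n. diffs c n * t ^ n) * t)"
    by (rule sums_mult2[OF diffs_equiv[OF sd]])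
  moreover have "of_nat n * c n * t ^ (n - Suc 0) * t = real n * c n * t ^ n" for n
    by (cases n) auto
  ultimately have s1: "(\<lambda>n. real n * c n * t ^ n) sums ((\<Sum>n. diffs c n * t ^ n) * t)" by simp
  have s2: "(\<lambda>n. m * (c n * t ^ n)) sums (m * (\<Sum>n. c n * t ^ n))"
    by (rule sums_mult[OF summable_sums[OF sm[OF nt]]])
  have "(\<lambda>n. real n * c n * t ^ n - m * (c n * t ^ n)) sums ((\<Sum>n. diffs c n * t ^ n) * t - m * (\<Sum>n. c n * t ^ n))"
    by (rule sums_diff[OF s1 s2])
  moreover have "real n * c n * t ^ n - m * (c n * t ^ n) = a n * (real n - m) ^ Suc k * t ^ n" for n
    by (simp add: c_def algebra_simps)
  ultimately have eq: "(\<Sum>n. a n * (real n - m) ^ Suc k * t ^ n) = (\<Sum>n. diffs c n * t ^ n) * t - m * (\<Sum>n. c n * t ^ n)"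
    by (simp add: sums_iff)
  have "((\<lambda>s. (\<Sum>n. c n * exp s ^ n) * exp (- m * s)) has_real_derivative
      ((\<Sum>n. diffs c n * t ^ n) * exp s * exp (- m * s) + (\<Sum>n. c n * exp s ^ n) * (exp (- m * s) * (- m)))) (at s)"
    using dP unfolding t_def
    by (auto intro!: derivative_eq_intros DERIV_chain2[where f = "\<lambda>z. \<Sum>n. c n * z ^ n"])
  moreover have "(\<Sum>n. diffs c n * t ^ n) * exp s * exp (- m * s) + (\<Sum>n. c n * exp s ^ n) * (exp (- m * s) * (- m))
     = Em a m (Suc k) s"
    unfolding Em_def t_def[symmetric] eq by (simp add: algebra_simps)
  ultimately show ?thesis unfolding Em_def c_def by simp
qed

lemma chainN_mono: "chainN S N u \<Longrightarrow> M \<le> N \<Longrightarrow> chainN S M u"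
  unfolding chainN_def by auto

lemma chainN_shift: "chainN S (Suc N) u \<Longrightarrow> chainN S N (\<lambda>k. u (Suc k))"
  unfolding chainN_def by auto

lemma chain_recip:
  assumes "\<forall>N. chainN S N u" "\<forall>x\<in>S. u 0 x > 0"
  shows "\<exists>v. chainN S N v \<and> (\<forall>x\<in>S. v 0 x = 1 / u 0 x)"
proof (induction N)
  case 0
  show ?case by (rule exI[of _ "\<lambda>k x. 1 / u 0 x"]) (simp add: chainN_def)
next
  case (Suc N)
  then obtain v where v: "chainN S N v" "\<forall>x\<in>S. v 0 x = 1 / u 0 x" by blast
  define vv where "vv = (\<lambda>k x. \<Sum>i=0..k. real (k choose i) * v i x * v (k-i) x)"
  have cvv: "chainN S N vv" unfolding vv_def by (rule chain_mult[OF v(1) v(1)])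
  have cu: "chainN S N (\<lambda>k. u (Suc k))" using assms(1) chainN_shift by blast
  define w where "w = (\<lambda>k x. \<Sum>i=0..k. real (k choose i) * u (Suc i) x * vv (k-i) x)"
  have cw: "chainN S N w" unfolding w_def by (rule chain_mult[OF cu cvv])
  define z where "z = (\<lambda>k x. if k = 0 then 1 / u 0 x else - w (k - 1) x)"
  have "chainN S (Suc N) z"
    unfolding chainN_def
  proof (intro allI impI ballI)
    fix k x assume k: "k < Suc N" and x: "x \<in> S"
    show "(z k has_real_derivative z (Suc k) x) (at x)"
    proof (cases k)
      case 0
      have d0: "(u 0 has_real_derivative u 1 x) (at x)" using assms(1) x unfolding chainN_def
        by (metis One_nat_def lessI)
      have pos: "u 0 x > 0" using assms(2) x by blast
      have "((\<lambda>x. 1 / u 0 x) has_real_derivative - (u 1 x / (u 0 x * u 0 x))) (at x)"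
        using DERIV_inverse_fun[OF d0] pos by (simp add: divide_inverse power2_eq_square inverse_mult_distrib)
      moreover have "z (Suc 0) x = - (u 1 x / (u 0 x * u 0 x))"
        using v(2) x pos by (simp add: z_def w_def vv_def)
      ultimately show ?thesis using 0 by (simp add: z_def)
    next
      case (Suc k')
      have "(w k' has_real_derivative w (Suc k') x) (at x)" using cw k x Suc unfolding chainN_def by auto
      hence "((\<lambda>x. - w k' x) has_real_derivative - w (Suc k') x) (at x)" by (rule DERIV_minus)
      thus ?thesis using Suc by (simp add: z_def)
    qed
  qed
  moreover have "\<forall>x\<in>S. z 0 x = 1 / u 0 x" by (simp add: z_def)
  ultimately show ?case by blast
qed

lemma chain_ln:
  assumes "\<forall>N. chainN S N u" "\<forall>x\<in>S. u 0 x > 0"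
  shows "\<exists>v. chainN S (Suc N) v \<and> (\<forall>x\<in>S. v 0 x = ln (u 0 x))"
proof -
  obtain r where r: "chainN S N r" "\<forall>x\<in>S. r 0 x = 1 / u 0 x" using chain_recip[OF assms] by blast
  have cu: "chainN S N (\<lambda>k. u (Suc k))" using assms(1) chainN_shift by blast
  define w where "w = (\<lambda>k x. \<Sum>i=0..k. real (k choose i) * u (Suc i) x * r (k-i) x)"
  have cw: "chainN S N w" unfolding w_def by (rule chain_mult[OF cu r(1)])
  define z where "z = (\<lambda>k x. if k = 0 then ln (u 0 x) else w (k - 1) x)"
  have "chainN S (Suc N) z"
    unfolding chainN_def
  proof (intro allI impI ballI)
    fix k x assume k: "k < Suc N" and x: "x \<in> S"
    show "(z k has_real_derivative z (Suc k) x) (at x)"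
    proof (cases k)
      case 0
      have d0: "(u 0 has_real_derivative u 1 x) (at x)" using assms(1) x unfolding chainN_def
        by (metis One_nat_def lessI)
      have pos: "u 0 x > 0" using assms(2) x by blast
      have "((\<lambda>x. ln (u 0 x)) has_real_derivative (u 1 x / u 0 x)) (at x)"
        using d0 pos by (auto intro!: derivative_eq_intros)
      moreover have "z (Suc 0) x = u 1 x / u 0 x"
        using r(2) x pos by (simp add: z_def w_def)
      ultimately show ?thesis using 0 by (simp add: z_def)
    next
      case (Suc k')
      have "(w k' has_real_derivative w (Suc k') x) (at x)" using cw k x Suc unfolding chainN_def by auto
      thus ?thesis using Suc by (simp add: z_def)
    qed
  qed
  moreover have "\<forall>x\<in>S. z 0 x = ln (u 0 x)" by (simp add: z_def)
  ultimately show ?thesis by blast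
qed

definition SS :: "(nat \<Rightarrow> real) \<Rightarrow> real set" where
  "SS a = {s. ereal (exp s) < conv_radius a}"

lemma open_SS: "open (SS a)"
  unfolding SS_def by (intro open_Collect_less continuous_intros)

lemma Em_chain: "inK a \<Longrightarrow> chainN (SS a) N (Em a m)"
  unfolding chainN_def SS_def using Em_deriv by blast

lemma summ0: "inK a \<Longrightarrow> s \<in> SS a \<Longrightarrow> summable (\<lambda>n. a n * (real n - m) ^ k * exp s ^ n)"
  by (rule summ_shift) (auto simp: SS_def)

lemma Em00_pos: assumes "inK a" "s \<in> SS a" shows "Em a m 0 s > 0"
proof -
  have "0 < (\<Sum>n. a n * (real n - m) ^ 0 * exp s ^ n)"
    using summ0[OF assms, of m 0] assms(1)
    by (intro suminf_pos2[where i=0]) (auto simp: inK_def)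
  thus ?thesis by (simp add: Em_def)
qed

lemma fulcrum_eq: "fulcrum a s = ln (Em a 0 0 s)"
  by (simp add: fulcrum_def pfun_def Em_def)

lemma Em1: assumes "inK a" "s \<in> SS a"
  shows "Em a m 1 s = (Em a 0 1 s - m * Em a 0 0 s) * exp (- m * s)"
proof -
  have "(\<Sum>n. a n * (real n - m) ^ 1 * exp s ^ n) = (\<Sum>n. a n * (real n - 0) ^ 1 * exp s ^ n) - m * (\<Sum>n. a n * (real n - 0) ^ 0 * exp s ^ n)"
    using summ0[OF assms, of 0 1] summ0[OF assms, of 0 0]
    by (subst suminf_mult[symmetric]) (auto simp: suminf_diff[symmetric] summable_mult algebra_simps)
  thus ?thesis by (simp add: Em_def)
qed

lemma Em0: "Em a m 0 s = Em a 0 0 s * exp (- m * s)"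
  by (simp add: Em_def)

lemma key:
  assumes "inK a" "x \<in> SS a"
  defines "m0 \<equiv> deriv (fulcrum a) x"
  shows "Em a m0 (Suc k) x = (\<Sum>i=0..k. real (k choose i) * Em a m0 i x *
            (if k - i = 0 then 0 else (deriv^^(Suc (k-i))) (fulcrum a) x))"
    and "m0 = Em a 0 1 x / Em a 0 0 x"
proof -
  let ?S = "SS a"
  have ch0: "\<forall>N. chainN ?S N (Em a 0)" using Em_chain[OF assms(1)] by blast
  have pos0: "\<forall>y\<in>?S. Em a 0 0 y > 0" using Em00_pos[OF assms(1)] by blast
  obtain v where v: "chainN ?S (Suc k) v" "\<forall>y\<in>?S. v 0 y = ln (Em a 0 0 y)"
    using chain_ln[OF ch0 pos0] by blast
  have dF: "(deriv^^j) (fulcrum a) y = v j y" if "j \<le> Suc k" "y \<in> ?S" for j y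
    using chain_deriv[OF open_SS v(1), of "fulcrum a"] v(2) that by (simp add: fulcrum_eq)
  have v1: "v 1 y = Em a 0 1 y / Em a 0 0 y" if y: "y \<in> ?S" for y
  proof -
    have d0: "(Em a 0 0 has_real_derivative Em a 0 1 y) (at y)"
      using ch0 y unfolding chainN_def by (metis One_nat_def lessI)
    have "((\<lambda>y. ln (Em a 0 0 y)) has_real_derivative (Em a 0 1 y / Em a 0 0 y)) (at y)"
      using d0 pos0 y by (auto intro!: derivative_eq_intros)
    hence A: "(v 0 has_real_derivative (Em a 0 1 y / Em a 0 0 y)) (at y)"
      by (rule has_field_derivative_transform_within_open[OF _ open_SS y]) (use v(2) in auto)
    have B: "(v 0 has_real_derivative v 1 y) (at y)" using v(1) y unfolding chainN_def
      by (metis One_nat_def zero_less_Suc)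
    show ?thesis using DERIV_unique[OF B A] .
  qed
  have m0: "m0 = v 1 x" using dF[of 1 x] assms(2) by (simp add: m0_def)
  thus "m0 = Em a 0 1 x / Em a 0 0 x" using v1[OF assms(2)] by simp
  define h where "h = (\<lambda>j y. v (Suc j) y - (if j = 0 then m0 else 0))"
  have ch: "chainN ?S k h"
    unfolding chainN_def h_def
  proof (intro allI impI ballI)
    fix j y assume "j < k" "y \<in> ?S"
    hence "(v (Suc j) has_real_derivative v (Suc (Suc j)) y) (at y)" using v(1) unfolding chainN_def by auto
    thus "((\<lambda>y. v (Suc j) y - (if j = 0 then m0 else 0)) has_real_derivative
          v (Suc (Suc j)) y - (if Suc j = 0 then m0 else 0)) (at y)"
      by (auto intro!: derivative_eq_intros)
  qed
  define P where "P = (\<lambda>k x. \<Sum>i=0..k. real (k choose i) * Em a m0 i x * h (k-i) x)"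
  have cP: "chainN ?S k P" unfolding P_def by (rule chain_mult[OF Em_chain[OF assms(1)] ch])
  have P0: "\<forall>y\<in>?S. Em a m0 1 y = P 0 y"
  proof
    fix y assume y: "y \<in> ?S"
    have "Em a 0 0 y > 0" using pos0 y by blast
    thus "Em a m0 1 y = P 0 y"
      unfolding P_def h_def using v1[OF y] Em1[OF assms(1) y, of m0] Em0[of a m0 y]
      by (simp add: field_simps)
  qed
  have cE: "chainN ?S k (\<lambda>j. Em a m0 (Suc j))" using chainN_shift[OF Em_chain[OF assms(1)]] by blast
  have "(deriv^^k) (Em a m0 1) x = P k x"
    using chain_deriv[OF open_SS cP P0] assms(2) by simp
  moreover have "(deriv^^k) (Em a m0 1) x = Em a m0 (Suc k) x"
    using chain_deriv[OF open_SS cE, of "Em a m0 1"] assms(2) by simp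
  moreover have "P k x = (\<Sum>i=0..k. real (k choose i) * Em a m0 i x *
            (if k - i = 0 then 0 else (deriv^^(Suc (k-i))) (fulcrum a) x))"
    unfolding P_def h_def
  proof (intro sum.cong refl)
    fix i assume "i \<in> {0..k}"
    hence "Suc (k - i) \<le> Suc k" by simp
    note d = dF[OF this assms(2)]
    show "real (k choose i) * Em a m0 i x * (v (Suc (k - i)) x - (if k - i = 0 then m0 else 0)) =
         real (k choose i) * Em a m0 i x * (if k - i = 0 then 0 else (deriv ^^ Suc (k - i)) (fulcrum a) x)"
      using m0 m0[unfolded m0_def] by (simp only: d[symmetric]) (cases "k - i = 0", simp_all)
  qed
  ultimately show "Em a m0 (Suc k) x = (\<Sum>i=0..k. real (k choose i) * Em a m0 i x *
            (if k - i = 0 then 0 else (deriv^^(Suc (k-i))) (fulcrum a) x))" by simp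
qed

definition BE :: "'b filter \<Rightarrow> ('b \<Rightarrow> real) \<Rightarrow> bool" where
  "BE F u \<longleftrightarrow> (\<exists>B. eventually (\<lambda>x. \<bar>u x\<bar> \<le> B) F)"

lemma BE_const: "BE F (\<lambda>x. c)"
  unfolding BE_def by (rule exI[of _ "\<bar>c\<bar>"]) simp

lemma BE_cong: "eventually (\<lambda>x. u x = v x) F \<Longrightarrow> BE F u \<Longrightarrow> BE F v"
  unfolding BE_def
proof (elim exE)
  fix B assume "eventually (\<lambda>x. u x = v x) F" "eventually (\<lambda>x. \<bar>u x\<bar> \<le> B) F"
  hence "eventually (\<lambda>x. \<bar>v x\<bar> \<le> B) F" by eventually_elim simp
  thus "\<exists>B. eventually (\<lambda>x. \<bar>v x\<bar> \<le> B) F" by blast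
qed

lemma BE_add: "BE F u \<Longrightarrow> BE F v \<Longrightarrow> BE F (\<lambda>x. u x + v x)"
  unfolding BE_def
proof (elim exE)
  fix B1 B2 assume "eventually (\<lambda>x. \<bar>u x\<bar> \<le> B1) F" "eventually (\<lambda>x. \<bar>v x\<bar> \<le> B2) F"
  hence "eventually (\<lambda>x. \<bar>u x + v x\<bar> \<le> B1 + B2) F" by eventually_elim auto
  thus "\<exists>B. eventually (\<lambda>x. \<bar>u x + v x\<bar> \<le> B) F" by blast
qed

lemma BE_mult: "BE F u \<Longrightarrow> BE F v \<Longrightarrow> BE F (\<lambda>x. u x * v x)"
  unfolding BE_def
proof (elim exE)
  fix B1 B2 assume "eventually (\<lambda>x. \<bar>u x\<bar> \<le> B1) F" "eventually (\<lambda>x. \<bar>v x\<bar> \<le> B2) F"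
  hence "eventually (\<lambda>x. \<bar>u x * v x\<bar> \<le> B1 * B2) F"
    by eventually_elim (subst abs_mult, rule mult_mono, auto intro: order_trans[OF abs_ge_zero])
  thus "\<exists>B. eventually (\<lambda>x. \<bar>u x * v x\<bar> \<le> B) F" by blast
qed

lemma BE_minus: "BE F u \<Longrightarrow> BE F (\<lambda>x. - u x)"
  unfolding BE_def by simp

lemma BE_diff: "BE F u \<Longrightarrow> BE F v \<Longrightarrow> BE F (\<lambda>x. u x - v x)"
  using BE_add[of F u "\<lambda>x. - v x"] BE_minus[of F v] by simp

lemma BE_sum: "finite I \<Longrightarrow> (\<And>i. i \<in> I \<Longrightarrow> BE F (u i)) \<Longrightarrow> BE F (\<lambda>x. \<Sum>i\<in>I. u i x)"
proof (induction I rule: finite_induct)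
  case empty thus ?case by (simp add: BE_const)
next
  case (insert i I)
  thus ?case using BE_add[of F "u i" "\<lambda>x. \<Sum>i\<in>I. u i x"] by simp
qed

lemma Limsup_BE: "Limsup F (\<lambda>x. ereal \<bar>u x\<bar>) < \<infinity> \<longleftrightarrow> BE F u"
proof
  assume A: "Limsup F (\<lambda>x. ereal \<bar>u x\<bar>) < \<infinity>"
  obtain y where y: "Limsup F (\<lambda>x. ereal \<bar>u x\<bar>) < ereal y"
  proof (cases "Limsup F (\<lambda>x. ereal \<bar>u x\<bar>)")
    case (real r) thus ?thesis using that[of "r + 1"] by simp
  next
    case PInf thus ?thesis using A by simp
  next
    case MInf thus ?thesis using that[of 0] by simp
  qed
  have "eventually (\<lambda>x. ereal \<bar>u x\<bar> < ereal y) F" by (rule Limsup_lessD[OF y])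
  hence "eventually (\<lambda>x. \<bar>u x\<bar> \<le> y) F" by eventually_elim simp
  thus "BE F u" unfolding BE_def by blast
next
  assume "BE F u"
  then obtain B where "eventually (\<lambda>x. \<bar>u x\<bar> \<le> B) F" unfolding BE_def by blast
  hence "eventually (\<lambda>x. ereal \<bar>u x\<bar> \<le> ereal B) F" by eventually_elim simp
  hence "Limsup F (\<lambda>x. ereal \<bar>u x\<bar>) \<le> ereal B" by (rule Limsup_bounded)
  also have "ereal B < \<infinity>" by simp
  finally show "Limsup F (\<lambda>x. ereal \<bar>u x\<bar>) < \<infinity>" .
qed

lemma R_cases:
  assumes "inK a" "conv_radius a \<noteq> \<infinity>"
  obtains R where "conv_radius a = ereal R" "R > 0"
proof -
  have "conv_radius a > 0" using assms(1) by (simp add: inK_def)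
  thus ?thesis using assms(2) that by (cases "conv_radius a") auto
qed

lemma exp_lt: "(R::real) > 0 \<Longrightarrow> x < ln R \<Longrightarrow> exp x < R"
  using exp_less_mono[of x "ln R"] by simp

lemma filt1: assumes "inK a" shows "filterlim exp (to_R a) (to_lnR a)"
proof (cases "conv_radius a = \<infinity>")
  case True thus ?thesis by (simp add: to_R_def to_lnR_def exp_at_top)
next
  case False
  then obtain R where R: "conv_radius a = ereal R" "R > 0" using R_cases[OF assms] by blast
  have "filterlim exp (at_left R) (at_left (ln R))"
  proof (rule tendsto_imp_filterlim_at_left)
    have "(exp \<longlongrightarrow> exp (ln R)) (at_left (ln R))"
      by (intro tendsto_intros tendsto_ident_at)
    thus "(exp \<longlongrightarrow> R) (at_left (ln R))" using R by simp
    have "eventually (\<lambda>x. x \<in> {ln R - 1<..<ln R}) (at_left (ln R))" by (rule eventually_at_left_real) simp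
    thus "eventually (\<lambda>x. exp x < R) (at_left (ln R))"
      by eventually_elim (use R exp_lt in auto)
  qed
  thus ?thesis using False R by (simp add: to_R_def to_lnR_def)
qed

lemma filt2: assumes "inK a" shows "filterlim ln (to_lnR a) (to_R a)" "eventually (\<lambda>t. t > 0) (to_R a)"
proof -
  have "filterlim ln (to_lnR a) (to_R a) \<and> eventually (\<lambda>t. t > 0) (to_R a)"
  proof (cases "conv_radius a = \<infinity>")
    case True thus ?thesis by (simp add: to_R_def to_lnR_def ln_at_top eventually_gt_at_top)
  next
    case False
    then obtain R where R: "conv_radius a = ereal R" "R > 0" using R_cases[OF assms] by blast
    have ev: "eventually (\<lambda>x. x \<in> {0<..<R}) (at_left R)" by (rule eventually_at_left_real) (use R in simp)
    have "filterlim ln (at_left (ln R)) (at_left R)"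
    proof (rule tendsto_imp_filterlim_at_left)
      show "(ln \<longlongrightarrow> ln R) (at_left R)"
        using R by (intro tendsto_intros tendsto_ident_at) simp
      show "eventually (\<lambda>x. ln x < ln R) (at_left R)"
        using ev by eventually_elim auto
    qed
    moreover have "eventually (\<lambda>t. t > 0) (at_left R)" using ev by eventually_elim auto
    ultimately show ?thesis using False R by (simp add: to_R_def to_lnR_def)
  qed
  thus "filterlim ln (to_lnR a) (to_R a)" "eventually (\<lambda>t. t > 0) (to_R a)" by blast+
qed

lemma ev_SS: assumes "inK a" shows "eventually (\<lambda>s. s \<in> SS a) (to_lnR a)"
proof (cases "conv_radius a = \<infinity>")
  case True thus ?thesis by (simp add: to_lnR_def SS_def)
next
  case False
  then obtain R where R: "conv_radius a = ereal R" "R > 0" using R_cases[OF assms] by blast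
  have "eventually (\<lambda>x. x \<in> {ln R - 1<..<ln R}) (at_left (ln R))" by (rule eventually_at_left_real) simp
  hence "eventually (\<lambda>s. s \<in> SS a) (at_left (ln R))"
    by eventually_elim (use R exp_lt in \<open>auto simp: SS_def\<close>)
  thus ?thesis using False R by (simp add: to_lnR_def)
qed

lemma BE_transfer: assumes "inK a" shows "BE (to_R a) u \<longleftrightarrow> BE (to_lnR a) (\<lambda>s. u (exp s))"
proof
  assume "BE (to_R a) u"
  then obtain B where "eventually (\<lambda>t. \<bar>u t\<bar> \<le> B) (to_R a)" unfolding BE_def by blast
  hence "eventually (\<lambda>s. \<bar>u (exp s)\<bar> \<le> B) (to_lnR a)"
    using filt1[OF assms] unfolding filterlim_iff by blast
  thus "BE (to_lnR a) (\<lambda>s. u (exp s))" unfolding BE_def by blast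
next
  assume "BE (to_lnR a) (\<lambda>s. u (exp s))"
  then obtain B where "eventually (\<lambda>s. \<bar>u (exp s)\<bar> \<le> B) (to_lnR a)" unfolding BE_def by blast
  hence "eventually (\<lambda>t. \<bar>u (exp (ln t))\<bar> \<le> B) (to_R a)"
    using filt2(1)[OF assms] unfolding filterlim_iff by blast
  hence "eventually (\<lambda>t. \<bar>u t\<bar> \<le> B) (to_R a)"
    using filt2(2)[OF assms] by eventually_elim simp
  thus "BE (to_R a) u" unfolding BE_def by blast
qed

lemma Em_pos: assumes "inK a" "s \<in> SS a" shows "Em a m 0 s > 0"
  using Em00_pos[OF assms, of 0] Em0[of a m s] by simp

lemma Em2_pos: assumes "inK a" "s \<in> SS a" shows "Em a m 2 s > 0"
proof -
  have ap: "\<And>n. a n \<ge> 0" "a 0 > 0" using assms(1) by (auto simp: inK_def)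
  obtain n0 where n0: "n0 > 0" "a n0 \<noteq> 0" using assms(1) by (auto simp: inK_def)
  have sm: "summable (\<lambda>n. a n * (real n - m) ^ 2 * exp s ^ n)" by (rule summ0[OF assms])
  have "0 < (\<Sum>n. a n * (real n - m) ^ 2 * exp s ^ n)"
  proof (cases "m = 0")
    case True
    have "a n0 > 0" using ap(1)[of n0] n0(2) by linarith
    thus ?thesis using sm ap(1) n0(1) True by (intro suminf_pos2[where i=n0]) auto
  next
    case False
    thus ?thesis using sm ap by (intro suminf_pos2[where i=0]) auto
  qed
  thus ?thesis by (simp add: Em_def)
qed

lemma pfun_Em: "pfun a (exp s) = Em a 0 0 s"
  by (simp add: pfun_def Em_def)

lemma kexp_pow: assumes "inK a" "s \<in> SS a"
  shows "kexp a (exp s) (\<lambda>n. (real n - m) ^ k) = Em a m k s / Em a m 0 s"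
    and "summable (\<lambda>n. (real n - m) ^ k * kprob a (exp s) n)"
proof -
  have sm: "summable (\<lambda>n. a n * (real n - m) ^ k * exp s ^ n / pfun a (exp s))"
    by (rule summable_divide[OF summ0[OF assms]])
  thus "summable (\<lambda>n. (real n - m) ^ k * kprob a (exp s) n)"
    by (simp add: kprob_def algebra_simps)
  have "kexp a (exp s) (\<lambda>n. (real n - m) ^ k) = (\<Sum>n. a n * (real n - m) ^ k * exp s ^ n / pfun a (exp s))"
    by (simp add: kexp_def kprob_def algebra_simps)
  also have "\<dots> = (\<Sum>n. a n * (real n - m) ^ k * exp s ^ n) / pfun a (exp s)"
    by (rule suminf_divide[OF summ0[OF assms]])
  also have "\<dots> = Em a m k s / Em a m 0 s"
    by (simp add: Em_def pfun_def)
  finally show "kexp a (exp s) (\<lambda>n. (real n - m) ^ k) = Em a m k s / Em a m 0 s" .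
qed

definition cc :: "(nat \<Rightarrow> real) \<Rightarrow> nat \<Rightarrow> real \<Rightarrow> real" where
  "cc a k s = Em a (deriv (fulcrum a) s) k s / Em a (deriv (fulcrum a) s) 0 s"

lemma kmean_eq: assumes "inK a" "s \<in> SS a" shows "kmean a (exp s) = deriv (fulcrum a) s"
proof -
  have "kmean a (exp s) = kexp a (exp s) (\<lambda>n. (real n - 0) ^ 1)" by (simp add: kmean_def)
  also have "\<dots> = Em a 0 1 s / Em a 0 0 s" by (rule kexp_pow(1)[OF assms])
  also have "\<dots> = deriv (fulcrum a) s" using key(2)[OF assms] by simp
  finally show ?thesis .
qed

lemma kvar_eq: assumes "inK a" "s \<in> SS a" shows "kvar a (exp s) = cc a 2 s"
  unfolding kvar_def kmean_eq[OF assms] cc_def by (rule kexp_pow(1)[OF assms])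

lemma knm_eq: assumes "inK a" "s \<in> SS a"
  shows "knormmoment a k (exp s) = cc a k s / sqrt (cc a 2 s) ^ k"
proof -
  define m where "m = deriv (fulcrum a) s"
  define \<sigma> where "\<sigma> = sqrt (cc a 2 s)"
  have "knormmoment a k (exp s) = (\<Sum>n. (real n - m) ^ k * kprob a (exp s) n / \<sigma> ^ k)"
    unfolding knormmoment_def kexp_def ksigma_def kvar_eq[OF assms] kmean_eq[OF assms] m_def \<sigma>_def
    by (simp add: power_divide)
  also have "\<dots> = (\<Sum>n. (real n - m) ^ k * kprob a (exp s) n) / \<sigma> ^ k"
    by (rule suminf_divide[OF kexp_pow(2)[OF assms]])
  also have "\<dots> = cc a k s / \<sigma> ^ k"
    using kexp_pow(1)[OF assms, of m k] by (simp add: kexp_def cc_def m_def)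
  finally show ?thesis by (simp add: \<sigma>_def)
qed

lemma cc_rec: assumes "inK a" "s \<in> SS a"
  shows "cc a (Suc k) s = (\<Sum>i=0..k. real (k choose i) * cc a i s *
            (if k - i = 0 then 0 else (deriv^^(Suc (k-i))) (fulcrum a) s))"
  unfolding cc_def key(1)[OF assms, of k] by (simp add: sum_divide_distrib)

lemma cc_basic: assumes "inK a" "s \<in> SS a"
  shows "cc a 0 s = 1" "cc a 1 s = 0" "cc a 2 s = (deriv^^2) (fulcrum a) s" "cc a 2 s > 0"
proof -
  have p: "Em a (deriv (fulcrum a) s) 0 s > 0" by (rule Em_pos[OF assms])
  show c0: "cc a 0 s = 1" using p by (simp add: cc_def)
  show c1: "cc a 1 s = 0" using cc_rec[OF assms, of 0] by simp
  show "cc a 2 s = (deriv^^2) (fulcrum a) s" using cc_rec[OF assms, of 1] c0 c1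
    by (simp add: numeral_2_eq_2)
  show "cc a 2 s > 0" using p Em2_pos[OF assms, of "deriv (fulcrum a) s"] by (simp add: cc_def)
qed

definition kh :: "(nat \<Rightarrow> real) \<Rightarrow> nat \<Rightarrow> real \<Rightarrow> real" where
  "kh a j s = (deriv^^j) (fulcrum a) s / ((deriv^^2) (fulcrum a) s) powr (real j / 2)"

definition ch :: "(nat \<Rightarrow> real) \<Rightarrow> nat \<Rightarrow> real \<Rightarrow> real" where
  "ch a k s = knormmoment a k (exp s)"

lemma ch_fun: "ch a k = (\<lambda>s. knormmoment a k (exp s))"
  by (rule ext) (simp add: ch_def)

lemma powr_half_pow: "(c::real) > 0 \<Longrightarrow> c powr (real j / 2) = sqrt c ^ j"
proof -
  assume c: "c > 0"
  have "sqrt c ^ j = (c powr (1/2)) ^ j" using c by (simp add: powr_half_sqrt)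
  also have "\<dots> = c powr (real j / 2)" using c by (simp add: powr_realpow[symmetric] powr_powr)
  finally show ?thesis by simp
qed

lemma norm_rec: assumes "inK a" "s \<in> SS a"
  shows "ch a (Suc k) s = (\<Sum>i=0..k. real (k choose i) * ch a i s * (if k - i = 0 then 0 else kh a (Suc (k-i)) s))"
proof -
  define \<sigma> where "\<sigma> = sqrt (cc a 2 s)"
  have c2: "cc a 2 s > 0" by (rule cc_basic(4)[OF assms])
  hence sp: "\<sigma> > 0" by (simp add: \<sigma>_def)
  have khe: "kh a j s = (deriv^^j) (fulcrum a) s / \<sigma> ^ j" for j
    unfolding kh_def cc_basic(3)[OF assms, symmetric] powr_half_pow[OF c2] \<sigma>_def ..
  have che: "ch a i s = cc a i s / \<sigma> ^ i" for i
    unfolding ch_def knm_eq[OF assms] \<sigma>_def ..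
  have "ch a (Suc k) s = (\<Sum>i=0..k. real (k choose i) * cc a i s *
            (if k - i = 0 then 0 else (deriv^^(Suc (k-i))) (fulcrum a) s)) / \<sigma> ^ Suc k"
    unfolding che cc_rec[OF assms] ..
  also have "\<dots> = (\<Sum>i=0..k. real (k choose i) * cc a i s *
            (if k - i = 0 then 0 else (deriv^^(Suc (k-i))) (fulcrum a) s) / \<sigma> ^ Suc k)"
    by (rule sum_divide_distrib)
  also have "\<dots> = (\<Sum>i=0..k. real (k choose i) * ch a i s * (if k - i = 0 then 0 else kh a (Suc (k-i)) s))"
  proof (intro sum.cong refl)
    fix i assume "i \<in> {0..k}"
    hence "\<sigma> ^ Suc k = \<sigma> ^ i * \<sigma> ^ Suc (k - i)" by (simp add: power_add[symmetric])
    thus "real (k choose i) * cc a i s * (if k - i = 0 then 0 else (deriv^^(Suc (k-i))) (fulcrum a) s) / \<sigma> ^ Suc k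
        = real (k choose i) * ch a i s * (if k - i = 0 then 0 else kh a (Suc (k-i)) s)"
      using sp unfolding che khe by (simp add: field_simps)
  qed
  finally show ?thesis .
qed

lemma norm_basic: assumes "inK a" "s \<in> SS a"
  shows "ch a 0 s = 1" "ch a 1 s = 0" "ch a 2 s = 1" "kh a 2 s = 1"
proof -
  have c2: "cc a 2 s > 0" by (rule cc_basic(4)[OF assms])
  show "ch a 0 s = 1" unfolding ch_def knm_eq[OF assms] using cc_basic[OF assms] by simp
  show "ch a 1 s = 0" unfolding ch_def knm_eq[OF assms] using cc_basic[OF assms] by simp
  show "ch a 2 s = 1" unfolding ch_def knm_eq[OF assms] using c2 by simp
  show "kh a 2 s = 1" unfolding kh_def cc_basic(3)[OF assms, symmetric] using c2 by simp
qed

lemma dir1: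
  assumes "inK a" "\<forall>j\<in>{3..n}. BE (to_lnR a) (kh a j)"
  shows "k \<le> n \<Longrightarrow> BE (to_lnR a) (ch a k)"
proof (induction k rule: less_induct)
  case (less k)
  let ?L = "to_lnR a"
  have evS: "eventually (\<lambda>s. s \<in> SS a) ?L" by (rule ev_SS[OF assms(1)])
  show ?case
  proof (cases k)
    case 0
    have "eventually (\<lambda>s. 1 = ch a 0 s) ?L" using evS by eventually_elim (simp add: norm_basic[OF assms(1)])
    thus ?thesis unfolding 0 by (rule BE_cong[OF _ BE_const])
  next
    case (Suc k')
    have "BE ?L (\<lambda>s. \<Sum>i=0..k'. real (k' choose i) * ch a i s * (if k' - i = 0 then 0 else kh a (Suc (k'-i)) s))"
    proof (intro BE_sum BE_mult BE_const)
      fix i assume i: "i \<in> {0..k'}"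
      have "i < k" "i \<le> n" using Suc i less.prems by auto
      thus "BE ?L (ch a i)" by (rule less.IH)
      show "BE ?L (\<lambda>s. if k' - i = 0 then 0 else kh a (Suc (k'-i)) s)"
      proof (cases "k' - i = 0")
        case True thus ?thesis by (simp add: BE_const)
      next
        case False
        show ?thesis
        proof (cases "Suc (k' - i) = 2")
          case True
          have "eventually (\<lambda>s. 1 = (if k' - i = 0 then 0 else kh a (Suc (k'-i)) s)) ?L"
            using evS by eventually_elim (use False True norm_basic(4)[OF assms(1)] in \<open>simp add: numeral_2_eq_2\<close>)
          thus ?thesis by (rule BE_cong[OF _ BE_const])
        next
          case F2: False
          have "Suc (k' - i) \<in> {3..n}" using False F2 less.prems Suc i by auto
          hence "BE ?L (kh a (Suc (k' - i)))" using assms(2) by blast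
          thus ?thesis using False by simp
        qed
      qed
    qed simp
    moreover have "eventually (\<lambda>s. (\<Sum>i=0..k'. real (k' choose i) * ch a i s * (if k' - i = 0 then 0 else kh a (Suc (k'-i)) s)) = ch a k s) ?L"
      using evS by eventually_elim (simp only: Suc norm_rec[OF assms(1)])
    ultimately show ?thesis by (rule BE_cong[rotated])
  qed
qed

lemma dir2:
  assumes "inK a" "\<forall>k\<in>{3..n}. BE (to_lnR a) (ch a k)"
  shows "j \<le> n \<Longrightarrow> 2 \<le> j \<Longrightarrow> BE (to_lnR a) (kh a j)"
proof (induction j rule: less_induct)
  case (less j)
  let ?L = "to_lnR a"
  have evS: "eventually (\<lambda>s. s \<in> SS a) ?L" by (rule ev_SS[OF assms(1)])
  have chb: "BE ?L (ch a i)" if hi: "i \<le> n" for i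
  proof -
    consider "i = 0" | "i = 1" | "i = 2" | "i \<in> {3..n}" using hi by force
    thus ?thesis
    proof cases
      case 1
      have "eventually (\<lambda>s. 1 = ch a i s) ?L" using evS by eventually_elim (simp add: 1 norm_basic[OF assms(1)])
      thus ?thesis by (rule BE_cong[OF _ BE_const])
    next
      case 2
      have "eventually (\<lambda>s. 0 = ch a i s) ?L" using evS by eventually_elim (metis 2 norm_basic(2)[OF assms(1)])
      thus ?thesis by (rule BE_cong[OF _ BE_const])
    next
      case 3
      have "eventually (\<lambda>s. 1 = ch a i s) ?L" using evS by eventually_elim (simp add: 3 norm_basic[OF assms(1)])
      thus ?thesis by (rule BE_cong[OF _ BE_const])
    qed (use assms(2) in blast)
  qed
  obtain k where k: "j = Suc k" "k \<ge> 1" using less.prems by (cases j) auto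
  let ?T = "\<lambda>i s. real (k choose i) * ch a i s * (if k - i = 0 then 0 else kh a (Suc (k-i)) s)"
  have "BE ?L (\<lambda>s. ch a (Suc k) s - (\<Sum>i\<in>{Suc 0..k}. ?T i s))"
  proof (intro BE_diff BE_sum BE_mult BE_const)
    show "BE ?L (ch a (Suc k))" using chb less.prems k by simp
    fix i assume i: "i \<in> {Suc 0..k}"
    show "BE ?L (ch a i)" using chb less.prems k i by simp
    show "BE ?L (\<lambda>s. if k - i = 0 then 0 else kh a (Suc (k-i)) s)"
    proof (cases "k - i = 0")
      case True thus ?thesis by (simp add: BE_const)
    next
      case False
      have "BE ?L (kh a (Suc (k - i)))" using less.IH[of "Suc (k - i)"] less.prems k i False by auto
      thus ?thesis using False by simp
    qed
  qed simp
  moreover have "eventually (\<lambda>s. ch a (Suc k) s - (\<Sum>i\<in>{Suc 0..k}. ?T i s) = kh a j s) ?L"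
    using evS
  proof eventually_elim
    case (elim s)
    have "ch a (Suc k) s = (\<Sum>i=0..k. ?T i s)" by (rule norm_rec[OF assms(1) elim])
    also have "\<dots> = ?T 0 s + (\<Sum>i\<in>{Suc 0..k}. ?T i s)"
      by (rule sum.atLeast_Suc_atMost) simp
    also have "?T 0 s = kh a j s" using k norm_basic[OF assms(1) elim] by simp
    finally show ?case by simp
  qed
  ultimately show ?case by (rule BE_cong[rotated])
qed

theorem lemma3p2:
  fixes a :: "nat \<Rightarrow> real" and n :: nat
  assumes "inK a" and "n \<ge> 3"
  shows "(\<forall>j\<in>{3..n}. Limsup (to_lnR a)
            (\<lambda>s. ereal (\<bar>(deriv ^^ j) (fulcrum a) s\<bar> /
                         ((deriv ^^ 2) (fulcrum a) s) powr (real j / 2))) < \<infinity>)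
         \<longleftrightarrow> (\<forall>k\<in>{3..n}. Limsup (to_R a) (\<lambda>t. ereal \<bar>knormmoment a k t\<bar>) < \<infinity>)"
proof -
  have L: "(\<lambda>s. ereal (\<bar>(deriv ^^ j) (fulcrum a) s\<bar> / ((deriv ^^ 2) (fulcrum a) s) powr (real j / 2)))
      = (\<lambda>s. ereal \<bar>kh a j s\<bar>)" for j
    by (simp add: kh_def abs_divide)
  have R: "Limsup (to_R a) (\<lambda>t. ereal \<bar>knormmoment a k t\<bar>) < \<infinity> \<longleftrightarrow> BE (to_lnR a) (ch a k)" for k
    by (simp only: Limsup_BE BE_transfer[OF assms(1)] ch_fun)
  have L': "Limsup (to_lnR a) (\<lambda>s. ereal \<bar>kh a j s\<bar>) < \<infinity> \<longleftrightarrow> BE (to_lnR a) (kh a j)" for j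
    by (rule Limsup_BE)
  show ?thesis unfolding L L' R
  proof (intro iffI ballI)
    fix k assume H: "\<forall>j\<in>{3..n}. BE (to_lnR a) (kh a j)" and k: "k \<in> {3..n}"
    thus "BE (to_lnR a) (ch a k)" using dir1[OF assms(1) H, of k] by simp
  next
    fix j assume H: "\<forall>k\<in>{3..n}. BE (to_lnR a) (ch a k)" and j: "j \<in> {3..n}"
    thus "BE (to_lnR a) (kh a j)" using dir2[OF assms(1) H, of j] by simp
  qed
qed

end
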